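(* Let $n\ge1$ and let $A\in\mathbb{R}^{2^n\times 2^n}$ be a symmetric matrix with non-negative entries, represented by a dictionary data structure with $s_0\le 2^n$ data items in the following sense: there are positive reals $A_0,\dots,A_{s_0-1}$, sets $S_c(l)\subseteq[0,2^n-1]$ for $l\in[0,s_0-1]$, and for each $j\in[0,2^n-1]$ a map $l\mapsto c_j(l)\in[0,2^n-1]$ (defined for $l$ with $j\in S_c(l)$) which is injective in $l$, such that the pairs $(c_j(l),j)$ are pairwise distinct and $$A=\sum_{l=0}^{s_0-1}\sum_{j\in S_c(l)}A_l\ket{c_j(l)}\bra{j}.$$ Let $m=\lceil\log_2 s_0\rceil$. Consider registers idx ($n$ qubits, split as $n-m$ high qubits and $m$ low qubits), del1 and del0 (one qubit each) and a system register ($n$ qubits). Suppose $O_c$ is a unitary on idx$\otimes$del1$\otimes$system such that $$O_c\ket{0}^{\otimes(n-m)}\ket{l}_{\rm idx}\ket{0}_{\rm del1}\ket{j}=\begin{cases}\ket{c_j(l)}_{\rm idx}\ket{0}_{\rm del1}\ket{j}, & \text{if } j\in S_c(l)\text{ and } l\in[0,s_0-1],\\ \ket{0}^{\otimes(n-m)}\ket{l}_{\rm idx}\ket{1}_{\rm del1}\ket{j}, & \text{if } j\notin S_c(l)\text{ or } l\in[s_0,2^m-1],\end{cases}$$ and $\mathrm{PREP}$ is a unitary on the low $m$ qubits of idx with $\mathrm{PREP}\ket{0}^{\otimes m}=\frac{1}{\sqrt{\sum_{l=0}^{s_0-1}A_l}}\sum_{l=0}^{s_0-1}\sqrt{A_l}\ket{l}$.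 Let $W=O_c(\mathrm{PREP}\otimes I)$ (with $O_c$ acting trivially on del0), let $S$ be the unitary that swaps the qubits del1 and del0 and swaps the $n$-qubit registers idx and system, and let $U_A=W^\dagger S W$. Then $U_A$ is a Hermitian block encoding of $A$ with subnormalization $\sum_{l=0}^{s_0-1}A_l$, i.e. $U_A$ is unitary and Hermitian and $$\big(\bra{0}^{\otimes n}_{\rm idx}\bra{0}_{\rm del1}\bra{0}_{\rm del0}\otimes I_{2^n}\big)U_A\big(\ket{0}^{\otimes n}_{\rm idx}\ket{0}_{\rm del1}\ket{0}_{\rm del0}\otimes I_{2^n}\big)=\frac{A}{\sum_{l=0}^{s_0-1}A_l}.$$
   Context: $[a,b]=\{a,\dots,b\}$; $\ket{j}$ denotes the computational basis state of the binary representation of $j$; $I_N$ is the $N\times N$ identity. A Hermitian block encoding of a Hermitian matrix is a block encoding $U_A$ which is itself a Hermitian unitary. *)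

theory Defs
  imports Complex_Main "Jordan_Normal_Form.Matrix"
begin

definition dagger :: "complex mat \<Rightarrow> complex mat" where
  "dagger M = transpose_mat (map_mat cnj M)"

definition unitary_mat :: "nat \<Rightarrow> complex mat \<Rightarrow> bool" where
  "unitary_mat N U \<longleftrightarrow> U \<in> carrier_mat N N \<and> dagger U * U = 1\<^sub>m N \<and> U * dagger U = 1\<^sub>m N"

definition hermitian_mat :: "complex mat \<Rightarrow> bool" where
  "hermitian_mat M \<longleftrightarrow> dagger M = M"

text \<open>Total register: idx (n qubits) , del1 (1 qubit), del0 (1 qubit), system (n qubits),
  most significant first.
  Within idx, a = h*2^m + l where h are the n-m high qubits and l the m low qubits.\<close>

definition enc4 :: "nat \<Rightarrow> nat \<Rightarrow> nat \<Rightarrow> nat \<Rightarrow> nat \<Rightarrow> nat" where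
  "enc4 n a b c j = a * 2^(n+2) + b * 2^(n+1) + c * 2^n + j"

text \<open>Register idx del1 system (the space O_c acts on): |a>|b>|j> has index a*2^(n+1)+b*2^n+j.\<close>
definition enc3 :: "nat \<Rightarrow> nat \<Rightarrow> nat \<Rightarrow> nat \<Rightarrow> nat" where
  "enc3 n a b j = a * 2^(n+1) + b * 2^n + j"

definition r_idx :: "nat \<Rightarrow> nat \<Rightarrow> nat" where "r_idx n i = i div 2^(n+2)"
definition r_d1 :: "nat \<Rightarrow> nat \<Rightarrow> nat" where "r_d1 n i = (i div 2^(n+1)) mod 2"
definition r_d0 :: "nat \<Rightarrow> nat \<Rightarrow> nat" where "r_d0 n i = (i div 2^n) mod 2"
definition r_sys :: "nat \<Rightarrow> nat \<Rightarrow> nat" where "r_sys n i = i mod 2^n"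

text \<open>O_c (on idx, del1, system) extended by the identity on del0.\<close>
definition ext_del0 :: "nat \<Rightarrow> complex mat \<Rightarrow> complex mat" where
  "ext_del0 n Q = mat (2^(2*n+2)) (2^(2*n+2)) (\<lambda>(i,k).
     if r_d0 n i = r_d0 n k
     then Q $$ (enc3 n (r_idx n i) (r_d1 n i) (r_sys n i), enc3 n (r_idx n k) (r_d1 n k) (r_sys n k))
     else 0)"

text \<open>PREP (on the m low qubits of idx) tensored with the identity on everything else.\<close>
definition ext_prep :: "nat \<Rightarrow> nat \<Rightarrow> complex mat \<Rightarrow> complex mat" where
  "ext_prep n m P = mat (2^(2*n+2)) (2^(2*n+2)) (\<lambda>(i,k).
     if r_idx n i div 2^m = r_idx n k div 2^m \<and> r_d1 n i = r_d1 n k \<and> r_d0 n i = r_d0 n k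
        \<and> r_sys n i = r_sys n k
     then P $$ (r_idx n i mod 2^m, r_idx n k mod 2^m)
     else 0)"

text \<open>The swap S: swaps del1 with del0 and idx with system, i.e. S|a>|b>|c>|j> = |j>|c>|b>|a>.\<close>
definition swap_op :: "nat \<Rightarrow> complex mat" where
  "swap_op n = mat (2^(2*n+2)) (2^(2*n+2)) (\<lambda>(i,k).
     if i = enc4 n (r_sys n k) (r_d0 n k) (r_d1 n k) (r_idx n k) then 1 else 0)"

end

theory Submission
  imports Defs
begin


lemma mult_entry:
  assumes "A \<in> carrier_mat r c" "B \<in> carrier_mat c d" "i < r" "j < d"
  shows "(A * B) $$ (i,j) = (\<Sum>p<c. A $$ (i,p) * B $$ (p,j))"
  using assms by (auto simp: scalar_prod_def atLeast0LessThan intro!: sum.cong)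

lemma mult_vec_unit:
  fixes A :: "complex mat"
  assumes "A \<in> carrier_mat r c" "i < r" "y < c"
  shows "(A *\<^sub>v unit_vec c y) $ i = A $$ (i,y)"
proof -
  have "(A *\<^sub>v unit_vec c y) $ i = (\<Sum>p<c. A $$ (i,p) * (if p = y then 1 else 0))"
    using assms by (auto simp: scalar_prod_def atLeast0LessThan intro!: sum.cong)
  also have "\<dots> = A $$ (i,y)" using assms(3) by (simp add: if_distrib cong: if_cong)
  finally show ?thesis .
qed

lemma dagger_carrier: "Q \<in> carrier_mat a b \<Longrightarrow> dagger Q \<in> carrier_mat b a"
  by (auto simp: dagger_def)

lemma dagger_entry: "Q \<in> carrier_mat a b \<Longrightarrow> i < b \<Longrightarrow> j < a \<Longrightarrow> dagger Q $$ (i,j) = cnj (Q $$ (j,i))"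
  by (auto simp: dagger_def)

lemma dagger_mult:
  assumes "A \<in> carrier_mat r c" "B \<in> carrier_mat c d"
  shows "dagger (A * B) = dagger B * dagger A"
proof (rule eq_matI)
  fix i j assume "i < dim_row (dagger B * dagger A)" "j < dim_col (dagger B * dagger A)"
  then have ij: "i < d" "j < r" using assms by (auto simp: dagger_def)
  have "dagger (A * B) $$ (i,j) = cnj ((A*B) $$ (j,i))"
    using assms ij by (intro dagger_entry) auto
  also have "\<dots> = (\<Sum>p<c. cnj (A $$ (j,p)) * cnj (B $$ (p,i)))"
    using assms ij by (subst mult_entry[OF assms]) auto
  also have "\<dots> = (dagger B * dagger A) $$ (i,j)"
    using assms ij by (simp add: mult_entry[OF dagger_carrier dagger_carrier] dagger_entry mult.commute)
  finally show "dagger (A * B) $$ (i,j) = (dagger B * dagger A) $$ (i,j)" .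
qed (use assms in \<open>auto simp: dagger_def\<close>)

lemma dagger_dagger: "dagger (dagger Q) = Q"
  by (auto simp: dagger_def)

lemma unitary_mult:
  assumes "unitary_mat N A" "unitary_mat N B"
  shows "unitary_mat N (A * B)"
proof -
  have c: "A \<in> carrier_mat N N" "B \<in> carrier_mat N N" using assms by (auto simp: unitary_mat_def)
  have dc: "dagger A \<in> carrier_mat N N" "dagger B \<in> carrier_mat N N" using c by (auto intro: dagger_carrier)
  have 1: "dagger A * A = 1\<^sub>m N" "A * dagger A = 1\<^sub>m N" "dagger B * B = 1\<^sub>m N" "B * dagger B = 1\<^sub>m N"
    using assms by (auto simp: unitary_mat_def)
  have "dagger (A*B) * (A*B) = dagger B * (dagger A * A) * B"
    using c dc by (simp add: dagger_mult[OF c] assoc_mult_mat[of _ N N _ N _ N])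
  also have "\<dots> = 1\<^sub>m N" using 1 c dc by simp
  finally have x: "dagger (A*B) * (A*B) = 1\<^sub>m N" .
  have "(A*B) * dagger (A*B) = A * (B * dagger B) * dagger A"
    using c dc by (simp add: dagger_mult[OF c] assoc_mult_mat[of _ N N _ N _ N])
  also have "\<dots> = 1\<^sub>m N" using 1 c dc by simp
  finally show ?thesis using x c unfolding unitary_mat_def by auto
qed

definition liftm :: "nat \<Rightarrow> (nat \<Rightarrow> nat) \<Rightarrow> (nat \<Rightarrow> 'b) \<Rightarrow> complex mat \<Rightarrow> complex mat" where
  "liftm N f g Q = mat N N (\<lambda>(i,k). if g i = g k then Q $$ (f i, f k) else 0)"

locale fib =
  fixes N M :: nat and f :: "nat \<Rightarrow> nat" and g :: "nat \<Rightarrow> 'b"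
  assumes bij: "\<And>i. i < N \<Longrightarrow> bij_betw f {p. p < N \<and> g p = g i} {..<M}"
begin

lemma f_lt: "i < N \<Longrightarrow> f i < M"
  using bij[of i] by (auto simp: bij_betw_def)

lemma inj2: "i < N \<Longrightarrow> k < N \<Longrightarrow> g i = g k \<Longrightarrow> f i = f k \<Longrightarrow> i = k"
  using bij[of i] by (auto simp: bij_betw_def inj_on_def)

lemma lift_carrier: "liftm N f g Q \<in> carrier_mat N N"
  by (simp add: liftm_def)

lemma lift_entry: "i < N \<Longrightarrow> k < N \<Longrightarrow> liftm N f g Q $$ (i,k) = (if g i = g k then Q $$ (f i, f k) else 0)"
  by (simp add: liftm_def)

lemma lift_dagger: "Q \<in> carrier_mat M M \<Longrightarrow> dagger (liftm N f g Q) = liftm N f g (dagger Q)"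
  by (rule eq_matI) (auto simp: dagger_def liftm_def f_lt)

lemma lift_one: "liftm N f g (1\<^sub>m M) = 1\<^sub>m N"
  by (rule eq_matI) (auto simp: liftm_def f_lt dest: inj2)

lemma lift_mult:
  assumes "Q1 \<in> carrier_mat M M" "Q2 \<in> carrier_mat M M"
  shows "liftm N f g Q1 * liftm N f g Q2 = liftm N f g (Q1 * Q2)"
proof (rule eq_matI)
  fix i k assume "i < dim_row (liftm N f g (Q1 * Q2))" "k < dim_col (liftm N f g (Q1 * Q2))"
  then have ik: "i < N" "k < N" by (auto simp: liftm_def)
  have "(liftm N f g Q1 * liftm N f g Q2) $$ (i,k) =
     (\<Sum>p<N. (if g i = g p then Q1 $$ (f i, f p) else 0) * (if g p = g k then Q2 $$ (f p, f k) else 0))"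
    using ik by (simp add: mult_entry[OF lift_carrier lift_carrier] lift_entry)
  also have "\<dots> = (if g i = g k then (\<Sum>p\<in>{p. p < N \<and> g p = g i}. Q1 $$ (f i, f p) * Q2 $$ (f p, f k)) else 0)"
  proof (cases "g i = g k")
    case True
    have "(\<Sum>p<N. (if g i = g p then Q1 $$ (f i, f p) else 0) * (if g p = g k then Q2 $$ (f p, f k) else 0))
        = (\<Sum>p\<in>{..<N}. if p \<in> {p. p < N \<and> g p = g i} then Q1 $$ (f i, f p) * Q2 $$ (f p, f k) else 0)"
      using True by (intro sum.cong) auto
    also have "\<dots> = (\<Sum>p\<in>{p. p < N \<and> g p = g i}. Q1 $$ (f i, f p) * Q2 $$ (f p, f k))"
      by (subst sum.inter_filter[symmetric]) (auto intro!: sum.cong)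
    finally show ?thesis using True by simp
  qed (auto intro!: sum.neutral)
  also have "\<dots> = (if g i = g k then (\<Sum>q<M. Q1 $$ (f i, q) * Q2 $$ (q, f k)) else 0)"
    using sum.reindex_bij_betw[OF bij[OF ik(1)], of "\<lambda>q. Q1 $$ (f i, q) * Q2 $$ (q, f k)"]
    by (metis (no_types, lifting))
  also have "\<dots> = liftm N f g (Q1 * Q2) $$ (i,k)"
    using ik assms f_lt[OF ik(1)] f_lt[OF ik(2)] by (simp add: lift_entry mult_entry[OF assms] del: index_mult_mat)
  finally show "(liftm N f g Q1 * liftm N f g Q2) $$ (i,k) = liftm N f g (Q1 * Q2) $$ (i,k)" .
qed (auto simp: liftm_def)

lemma lift_unitary: "unitary_mat M Q \<Longrightarrow> unitary_mat N (liftm N f g Q)"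
  unfolding unitary_mat_def
  by (auto simp: lift_dagger lift_mult dagger_carrier lift_one lift_carrier)

end



lemma enc4_alt: "enc4 n a b c j = ((a*2+b)*2+c)*2^n + j"
  by (simp add: enc4_def algebra_simps power_add)

lemma enc3_alt: "enc3 n a b j = (a*2+b)*2^n + j"
  by (simp add: enc3_def algebra_simps power_add)

lemma div_pow_add: "x div (2::nat)^(n+k) = x div 2^n div 2^k"
  by (simp add: power_add div_mult2_eq)

lemma mod2_pow1: "(x::nat) div 2^(n+1) = x div 2^n div 2"
  using div_pow_add[of x n 1] by simp

lemma enc4_dec:
  assumes "b < 2" "c < 2" "j < 2^n"
  shows "r_idx n (enc4 n a b c j) = a" "r_d1 n (enc4 n a b c j) = b"
        "r_d0 n (enc4 n a b c j) = c" "r_sys n (enc4 n a b c j) = j"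
proof -
  have d: "enc4 n a b c j div 2^n = (a*2+b)*2+c" "enc4 n a b c j mod 2^n = j"
    using assms by (simp_all add: enc4_alt)
  show "r_idx n (enc4 n a b c j) = a" unfolding r_idx_def div_pow_add d using assms by simp
  show "r_d1 n (enc4 n a b c j) = b" unfolding r_d1_def mod2_pow1 d using assms by presburger
  show "r_d0 n (enc4 n a b c j) = c" unfolding r_d0_def d using assms by presburger
  show "r_sys n (enc4 n a b c j) = j" unfolding r_sys_def d by simp
qed

lemma enc3_dec:
  assumes "b < 2" "j < 2^n"
  shows "enc3 n a b j div 2^(n+1) = a" "(enc3 n a b j div 2^n) mod 2 = b" "enc3 n a b j mod 2^n = j"
proof -
  have d: "enc3 n a b j div 2^n = a*2+b" "enc3 n a b j mod 2^n = j"
    using assms by (simp_all add: enc3_alt)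
  show "enc3 n a b j div 2^(n+1) = a" unfolding div_pow_add d using assms by simp
  show "(enc3 n a b j div 2^n) mod 2 = b" unfolding d using assms by simp
  show "enc3 n a b j mod 2^n = j" by (fact d(2))
qed

lemma enc4_lt:
  assumes "a < 2^n" "b < 2" "c < 2" "j < 2^n"
  shows "enc4 n a b c j < 2^(2*n+2)"
proof -
  have "((a*2+b)*2+c) < 2^n*2*2" using assms by (simp add: algebra_simps)
  then have "((a*2+b)*2+c) + 1 \<le> 2^n*2*2" by linarith
  then have "(((a*2+b)*2+c) + 1) * 2^n \<le> 2^n*2*2*2^n" by (rule mult_right_mono) simp
  moreover have "(2::nat)^(2*n+2) = 2^n*2*2*2^n" unfolding mult_2 power_add by simp
  ultimately show ?thesis using assms(4) by (simp add: enc4_alt algebra_simps)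
qed

lemma enc3_lt:
  assumes "a < 2^n" "b < 2" "j < 2^n"
  shows "enc3 n a b j < 2^(2*n+1)"
proof -
  have "a*2+b < 2^n*2" using assms by linarith
  then have "(a*2+b) + 1 \<le> 2^n*2" by linarith
  then have "((a*2+b) + 1) * 2^n \<le> 2^n*2*2^n" by (rule mult_right_mono) simp
  moreover have "(2::nat)^(2*n+1) = 2^n*2*2^n" unfolding mult_2 power_add by simp
  ultimately show ?thesis using assms(3) by (simp add: enc3_alt algebra_simps)
qed

lemma dec_lt:
  assumes "i < 2^(2*n+2)"
  shows "r_idx n i < 2^n" "r_d1 n i < 2" "r_d0 n i < 2" "r_sys n i < 2^n"
proof -
  have "(2::nat)^(2*n+2) = 2^(n+2) * 2^n" unfolding mult_2 power_add by simp
  then show "r_idx n i < 2^n" using assms unfolding r_idx_def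
    by (simp add: less_mult_imp_div_less mult.commute)
qed (simp_all add: r_d1_def r_d0_def r_sys_def)

lemma enc4_rec: "enc4 n (r_idx n i) (r_d1 n i) (r_d0 n i) (r_sys n i) = i"
proof -
  have "i = (i div 2^n) * 2^n + i mod 2^n" by (rule div_mult_mod_eq[symmetric])
  moreover have "i div 2^n = (i div 2^n div 2) * 2 + (i div 2^n) mod 2" by (rule div_mult_mod_eq[symmetric])
  moreover have "i div 2^n div 2 = (i div 2^n div 2 div 2) * 2 + (i div 2^n div 2) mod 2" by (rule div_mult_mod_eq[symmetric])
  moreover have "i div 2^(n+2) = i div 2^n div 2 div 2"
    by (simp add: div_pow_add div_mult2_eq[symmetric])
  ultimately show ?thesis
    unfolding enc4_alt r_idx_def r_d1_def r_d0_def r_sys_def mod2_pow1 by presburger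
qed

lemma enc3_rec: "enc3 n (q div 2^(n+1)) ((q div 2^n) mod 2) (q mod 2^n) = q"
proof -
  have "q = (q div 2^n) * 2^n + q mod 2^n" by (rule div_mult_mod_eq[symmetric])
  moreover have "q div 2^n = (q div 2^n div 2) * 2 + (q div 2^n) mod 2" by (rule div_mult_mod_eq[symmetric])
  ultimately show ?thesis
    unfolding enc3_alt mod2_pow1 by presburger
qed



lemma enc4_inj:
  assumes "b < 2" "c < 2" "j < 2^n" "b' < 2" "c' < 2" "j' < 2^n"
  shows "enc4 n a b c j = enc4 n a' b' c' j' \<longleftrightarrow> a = a' \<and> b = b' \<and> c = c' \<and> j = j'"
  using enc4_dec[OF assms(1-3)] enc4_dec[OF assms(4-6)] by metis

lemma fib1: "fib (2^(2*n+2)) (2^(2*n+1)) (\<lambda>i. enc3 n (r_idx n i) (r_d1 n i) (r_sys n i)) (r_d0 n)"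
proof
  fix i :: nat assume i: "i < 2^(2*n+2)"
  let ?f = "\<lambda>i. enc3 n (r_idx n i) (r_d1 n i) (r_sys n i)"
  let ?F = "{p. p < 2^(2*n+2) \<and> r_d0 n p = r_d0 n i}"
  have inj: "inj_on ?f ?F"
  proof (rule inj_onI)
    fix p p' assume p: "p \<in> ?F" and p': "p' \<in> ?F" and e: "?f p = ?f p'"
    have pl: "p < 2^(2*n+2)" "p' < 2^(2*n+2)" using p p' by auto
    have "r_idx n p = r_idx n p'" "r_d1 n p = r_d1 n p'" "r_sys n p = r_sys n p'"
      using enc3_dec[OF dec_lt(2)[OF pl(1)] dec_lt(4)[OF pl(1)], of "r_idx n p"]
        enc3_dec[OF dec_lt(2)[OF pl(2)] dec_lt(4)[OF pl(2)], of "r_idx n p'"] e by metis+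
    then show "p = p'" using p p' enc4_rec[of n p] enc4_rec[of n p'] by auto
  qed
  have im: "?f ` ?F = {..<2^(2*n+1)}"
  proof
    show "?f ` ?F \<subseteq> {..<2^(2*n+1)}" using enc3_lt dec_lt by auto
    show "{..<2^(2*n+1)} \<subseteq> ?f ` ?F"
    proof
      fix q assume q: "q \<in> {..<(2::nat)^(2*n+1)}"
      define p where "p = enc4 n (q div 2^(n+1)) ((q div 2^n) mod 2) (r_d0 n i) (q mod 2^n)"
      have "(2::nat)^(2*n+1) = 2^(n+1) * 2^n" unfolding mult_2 power_add by simp
      then have a: "q div 2^(n+1) < 2^n" using q by (simp add: less_mult_imp_div_less)
      have d: "r_d0 n i < 2" using dec_lt[OF i] by simp
      have dp: "r_idx n p = q div 2^(n+1)" "r_d1 n p = (q div 2^n) mod 2" "r_d0 n p = r_d0 n i" "r_sys n p = q mod 2^n"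
        unfolding p_def using enc4_dec[OF _ d, of "(q div 2^n) mod 2" "q mod 2^n" n "q div 2^(n+1)"] by auto
      have "p < 2^(2*n+2)" unfolding p_def using a d by (intro enc4_lt) auto
      moreover have "?f p = q" unfolding dp by (rule enc3_rec)
      ultimately show "q \<in> ?f ` ?F" using dp by (auto intro!: image_eqI[of _ _ p])
    qed
  qed
  show "bij_betw ?f ?F {..<2^(2*n+1)}" using inj im by (simp add: bij_betw_def)
qed

lemma ext_del0_lift: "ext_del0 n Q = liftm (2^(2*n+2)) (\<lambda>i. enc3 n (r_idx n i) (r_d1 n i) (r_sys n i)) (r_d0 n) Q"
  unfolding ext_del0_def liftm_def by simp

lemma fib2:
  assumes mn: "m \<le> n"
  shows "fib (2^(2*n+2)) (2^m) (\<lambda>i. r_idx n i mod 2^m) (\<lambda>i. (r_idx n i div 2^m, r_d1 n i, r_d0 n i, r_sys n i))"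
proof
  fix i :: nat assume i: "i < 2^(2*n+2)"
  let ?f = "\<lambda>i. r_idx n i mod 2^m"
  let ?g = "\<lambda>i. (r_idx n i div 2^m, r_d1 n i, r_d0 n i, r_sys n i)"
  let ?F = "{p. p < 2^(2*n+2) \<and> ?g p = ?g i}"
  have inj: "inj_on ?f ?F"
  proof (rule inj_onI)
    fix p p' assume p: "p \<in> ?F" and p': "p' \<in> ?F" and e: "?f p = ?f p'"
    have "r_idx n p = r_idx n p'"
      using p p' e div_mult_mod_eq[of "r_idx n p" "2^m"] div_mult_mod_eq[of "r_idx n p'" "2^m"] by auto
    then show "p = p'" using p p' enc4_rec[of n p] enc4_rec[of n p'] by auto
  qed
  have im: "?f ` ?F = {..<2^m}"
  proof
    show "?f ` ?F \<subseteq> {..<2^m}" by auto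
    show "{..<2^m} \<subseteq> ?f ` ?F"
    proof
      fix q assume q: "q \<in> {..<(2::nat)^m}"
      define a where "a = r_idx n i"
      have a: "a < 2^n" using dec_lt[OF i] a_def by simp
      have pw: "(2::nat)^n = 2^(n-m) * 2^m" using mn by (simp flip: power_add)
      have "a div 2^m < 2^(n-m)" using a pw by (simp add: less_mult_imp_div_less)
      then have "a div 2^m + 1 \<le> 2^(n-m)" by simp
      then have "(a div 2^m + 1) * 2^m \<le> 2^(n-m) * 2^m" by (rule mult_right_mono) simp
      then have a2: "(a div 2^m) * 2^m + q < 2^n" using q pw by (simp add: algebra_simps)
      define p where "p = enc4 n ((a div 2^m) * 2^m + q) (r_d1 n i) (r_d0 n i) (r_sys n i)"
      have dl: "r_d1 n i < 2" "r_d0 n i < 2" "r_sys n i < 2^n" using dec_lt[OF i] by auto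
      have dp: "r_idx n p = (a div 2^m) * 2^m + q" "r_d1 n p = r_d1 n i" "r_d0 n p = r_d0 n i" "r_sys n p = r_sys n i"
        unfolding p_def using enc4_dec[OF dl] by auto
      have "p < 2^(2*n+2)" unfolding p_def using a2 dl by (intro enc4_lt) auto
      moreover have "?f p = q" unfolding dp using q by simp
      moreover have "?g p = ?g i" unfolding dp using q a_def by simp
      ultimately show "q \<in> ?f ` ?F" by (auto intro!: image_eqI[of _ _ p])
    qed
  qed
  show "bij_betw ?f ?F {..<2^m}" using inj im by (simp add: bij_betw_def)
qed

lemma ext_prep_lift: "ext_prep n m P = liftm (2^(2*n+2)) (\<lambda>i. r_idx n i mod 2^m) (\<lambda>i. (r_idx n i div 2^m, r_d1 n i, r_d0 n i, r_sys n i)) P"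
  unfolding ext_prep_def liftm_def by (rule eq_matI) auto

definition sig :: "nat \<Rightarrow> nat \<Rightarrow> nat" where
  "sig n k = enc4 n (r_sys n k) (r_d0 n k) (r_d1 n k) (r_idx n k)"

lemma sig_lt: "k < 2^(2*n+2) \<Longrightarrow> sig n k < 2^(2*n+2)"
  unfolding sig_def using dec_lt[of k n] by (intro enc4_lt) auto

lemma sig_sig: "k < 2^(2*n+2) \<Longrightarrow> sig n (sig n k) = k"
  unfolding sig_def using dec_lt[of k n] enc4_dec[of "r_d0 n k" "r_d1 n k" "r_idx n k" n "r_sys n k"] enc4_rec[of n k]
  by simp

lemma swap_entry: "i < 2^(2*n+2) \<Longrightarrow> k < 2^(2*n+2) \<Longrightarrow> swap_op n $$ (i,k) = (if i = sig n k then 1 else 0)"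
  unfolding swap_op_def sig_def by simp

lemma swap_carrier: "swap_op n \<in> carrier_mat (2^(2*n+2)) (2^(2*n+2))"
  unfolding swap_op_def by simp

lemma swap_dagger: "dagger (swap_op n) = swap_op n"
proof (rule eq_matI)
  fix i k assume "i < dim_row (swap_op n)" "k < dim_col (swap_op n)"
  then have ik: "i < 2^(2*n+2)" "k < 2^(2*n+2)" unfolding swap_op_def by auto
  have "(k = sig n i) = (i = sig n k)" using sig_sig[OF ik(1)] sig_sig[OF ik(2)] by auto
  then show "dagger (swap_op n) $$ (i, k) = swap_op n $$ (i, k)"
    using ik by (simp add: dagger_entry[OF swap_carrier] swap_entry)
qed (auto simp: dagger_def swap_op_def)

lemma swap_sq: "swap_op n * swap_op n = 1\<^sub>m (2^(2*n+2))"
proof (rule eq_matI)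
  fix i k assume "i < dim_row (1\<^sub>m (2^(2*n+2)))" "k < dim_col (1\<^sub>m (2^(2*n+2)) :: complex mat)"
  then have ik: "i < 2^(2*n+2)" "k < 2^(2*n+2)" by auto
  have "(swap_op n * swap_op n) $$ (i,k) = (\<Sum>p<2^(2*n+2). (if i = sig n p then 1 else 0) * (if p = sig n k then 1 else 0))"
    using ik by (simp add: mult_entry[OF swap_carrier swap_carrier] swap_entry)
  also have "\<dots> = (\<Sum>p<2^(2*n+2). if p = sig n k then (if i = sig n p then 1 else 0) else 0)"
    by (intro sum.cong) auto
  also have "\<dots> = (if i = k then 1 else 0)"
    using sig_lt[OF ik(2)] sig_sig[OF ik(2)] by simp
  finally show "(swap_op n * swap_op n) $$ (i,k) = 1\<^sub>m (2^(2*n+2)) $$ (i,k)" using ik by simp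
qed (auto simp: swap_op_def)

lemma swap_unitary: "unitary_mat (2^(2*n+2)) (swap_op n)"
  unfolding unitary_mat_def using swap_carrier swap_dagger swap_sq by simp

lemma dagger_unitary: "unitary_mat N U \<Longrightarrow> unitary_mat N (dagger U)"
  unfolding unitary_mat_def by (auto simp: dagger_dagger dagger_carrier)

lemma m_facts:
  fixes s0 n :: nat
  assumes "1 \<le> s0" "s0 \<le> 2^n"
  shows "s0 \<le> 2^(nat \<lceil>log 2 (real s0)\<rceil>)" "nat \<lceil>log 2 (real s0)\<rceil> \<le> n"
proof -
  have l0: "log 2 (real s0) \<ge> 0" using assms by simp
  have "real s0 = 2 powr (log 2 (real s0))" using assms by simp
  also have "\<dots> \<le> 2 powr (real (nat \<lceil>log 2 (real s0)\<rceil>))"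
    using l0 by (intro powr_mono) auto
  also have "\<dots> = 2 ^ (nat \<lceil>log 2 (real s0)\<rceil>)" by (simp add: powr_realpow)
  finally show "s0 \<le> 2^(nat \<lceil>log 2 (real s0)\<rceil>)" by (simp flip: of_nat_le_iff)
  have "log 2 (real s0) \<le> log 2 (2^n)" using assms
    by (subst log_le_cancel_iff) (auto simp flip: of_nat_le_iff)
  also have "\<dots> = n" by (simp add: log_nat_power)
  finally show "nat \<lceil>log 2 (real s0)\<rceil> \<le> n" by linarith
qed



lemma f1_iff:
  assumes p: "p < 2^(2*n+2)" and b: "b < 2" and k: "k < 2^n"
  shows "(r_d0 n p = 0 \<and> enc3 n (r_idx n p) (r_d1 n p) (r_sys n p) = enc3 n a b k) \<longleftrightarrow> p = enc4 n a b 0 k"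
proof
  assume h: "r_d0 n p = 0 \<and> enc3 n (r_idx n p) (r_d1 n p) (r_sys n p) = enc3 n a b k"
  have e: "enc3 n (r_idx n p) (r_d1 n p) (r_sys n p) = enc3 n a b k" using h by simp
  note d1 = enc3_dec[OF dec_lt(2)[OF p] dec_lt(4)[OF p], of "r_idx n p", unfolded e]
  note d2 = enc3_dec[OF b k, of a]
  have "r_idx n p = a" "r_d1 n p = b" "r_sys n p = k"
    using d1 d2 by simp_all
  then show "p = enc4 n a b 0 k" using h enc4_rec[of n p] by simp
next
  assume "p = enc4 n a b 0 k"
  then show "r_d0 n p = 0 \<and> enc3 n (r_idx n p) (r_d1 n p) (r_sys n p) = enc3 n a b k"
    using enc4_dec[OF b _ k, of 0 a] by simp
qed

lemma sig_enc4: "b < 2 \<Longrightarrow> c < 2 \<Longrightarrow> j < 2^n \<Longrightarrow> a < 2^n \<Longrightarrow> sig n (enc4 n a b c j) = enc4 n j c b a"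
  unfolding sig_def using enc4_dec[of b c j n a] by presburger

lemma sum_unique:
  fixes h :: "nat \<Rightarrow> real"
  assumes "l0 < s" "P l0" "\<And>l. l < s \<Longrightarrow> P l \<Longrightarrow> l = l0"
  shows "(\<Sum>l<s. if P l then h l else 0) = h l0"
proof -
  have "(\<Sum>l<s. if P l then h l else 0) = (\<Sum>l<s. if l = l0 then h l else 0)"
  proof (intro sum.cong refl)
    fix l assume l: "l \<in> {..<s}"
    show "(if P l then h l else 0) = (if l = l0 then h l else 0)"
    proof (cases "P l")
      case True then have "l = l0" using assms(3) l by blast
      then show ?thesis using True by simp
    next
      case False then have "l \<noteq> l0" using assms(2) by blast
      then show ?thesis using False by simp
    qed
  qed
  also have "\<dots> = h l0" using assms(1) by simp
  finally show ?thesis .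
qed

theorem theorem2:
  fixes n s0 :: nat
    and A :: "real mat"
    and Aval :: "nat \<Rightarrow> real"
    and S :: "nat \<Rightarrow> nat set"
    and c :: "nat \<Rightarrow> nat \<Rightarrow> nat"
    and Oc PREP :: "complex mat"
  defines "m \<equiv> nat \<lceil>log 2 (real s0)\<rceil>"
  defines "\<Lambda> \<equiv> (\<Sum>l<s0. Aval l)"
  defines "W \<equiv> ext_del0 n Oc * ext_prep n m PREP"
  defines "U_A \<equiv> dagger W * swap_op n * W"
  assumes n_pos: "n \<ge> 1"
    and s0_pos: "1 \<le> s0" and s0_le: "s0 \<le> 2^n"
    and A_carrier: "A \<in> carrier_mat (2^n) (2^n)"
    and A_sym: "transpose_mat A = A"
    and A_nonneg: "\<forall>i<2^n. \<forall>k<2^n. A $$ (i,k) \<ge> 0"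
    and Aval_pos: "\<forall>l<s0. Aval l > 0"
    and S_sub: "\<forall>l<s0. S l \<subseteq> {0..<2^n}"
    and c_range: "\<forall>l<s0. \<forall>j\<in>S l. c j l < 2^n"
    and c_inj: "\<forall>j<2^n. inj_on (c j) {l. l < s0 \<and> j \<in> S l}"
    and pairs_distinct: "\<forall>l<s0. \<forall>l'<s0. \<forall>j\<in>S l. \<forall>j'\<in>S l'.
                            (c j l, j) = (c j' l', j') \<longrightarrow> (l, j) = (l', j')"
    and A_dict: "\<forall>i<2^n. \<forall>k<2^n.
                   A $$ (i,k) = (\<Sum>l<s0. \<Sum>j\<in>S l. if c j l = i \<and> j = k then Aval l else 0)"
    and Oc_unitary: "unitary_mat (2^(2*n+1)) Oc"
    and Oc_in: "\<forall>l<s0. \<forall>j<2^n. j \<in> S l \<longrightarrow>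
                  Oc *\<^sub>v unit_vec (2^(2*n+1)) (enc3 n l 0 j) = unit_vec (2^(2*n+1)) (enc3 n (c j l) 0 j)"
    and Oc_out: "\<forall>l<2^m. \<forall>j<2^n. (j \<notin> S l \<or> s0 \<le> l) \<longrightarrow>
                  Oc *\<^sub>v unit_vec (2^(2*n+1)) (enc3 n l 0 j) = unit_vec (2^(2*n+1)) (enc3 n l 1 j)"
    and PREP_unitary: "unitary_mat (2^m) PREP"
    and PREP_0: "PREP *\<^sub>v unit_vec (2^m) 0 =
                   vec (2^m) (\<lambda>l. if l < s0 then complex_of_real (sqrt (Aval l) / sqrt \<Lambda>) else 0)"
  shows "unitary_mat (2^(2*n+2)) U_A \<and> hermitian_mat U_A \<and>
         (\<forall>i<2^n. \<forall>k<2^n.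
            U_A $$ (enc4 n 0 0 0 i, enc4 n 0 0 0 k) = complex_of_real (A $$ (i,k) / \<Lambda>))"
proof -
  let ?N = "(2::nat)^(2*n+2)"
  let ?M = "(2::nat)^(2*n+1)"
  let ?f1 = "\<lambda>i. enc3 n (r_idx n i) (r_d1 n i) (r_sys n i)"
  let ?f2 = "\<lambda>i. r_idx n i mod 2^m"
  let ?g2 = "\<lambda>i. (r_idx n i div 2^m, r_d1 n i, r_d0 n i, r_sys n i)"
  have mf: "s0 \<le> 2^m" "m \<le> n" using m_facts[OF s0_pos s0_le] unfolding m_def by auto
  interpret F1: fib ?N ?M ?f1 "r_d0 n" by (rule fib1)
  interpret F2: fib ?N "2^m" ?f2 ?g2 by (rule fib2[OF mf(2)])
  define L1 where "L1 = ext_del0 n Oc"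
  define L2 where "L2 = ext_prep n m PREP"
  have Oc_c: "Oc \<in> carrier_mat ?M ?M" using Oc_unitary by (simp add: unitary_mat_def)
  have PREP_c: "PREP \<in> carrier_mat (2^m) (2^m)" using PREP_unitary by (simp add: unitary_mat_def)
  have L1u: "unitary_mat ?N L1" unfolding L1_def ext_del0_lift by (rule F1.lift_unitary[OF Oc_unitary])
  have L2u: "unitary_mat ?N L2" unfolding L2_def ext_prep_lift by (rule F2.lift_unitary[OF PREP_unitary])
  have L1c: "L1 \<in> carrier_mat ?N ?N" unfolding L1_def ext_del0_lift by (rule F1.lift_carrier)
  have L2c: "L2 \<in> carrier_mat ?N ?N" unfolding L2_def ext_prep_lift by (rule F2.lift_carrier)
  have WL: "W = L1 * L2" unfolding W_def L1_def L2_def ..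
  have Wu: "unitary_mat ?N W" unfolding WL by (rule unitary_mult[OF L1u L2u])
  have Wc: "W \<in> carrier_mat ?N ?N" using Wu by (simp add: unitary_mat_def)
  have dWc: "dagger W \<in> carrier_mat ?N ?N" using Wc by (rule dagger_carrier)
  have Sc: "swap_op n \<in> carrier_mat ?N ?N" by (rule swap_carrier)
  have U_u: "unitary_mat ?N U_A" unfolding U_A_def
    by (intro unitary_mult dagger_unitary Wu swap_unitary)
  have DSc: "dagger W * swap_op n \<in> carrier_mat ?N ?N" by (rule mult_carrier_mat[OF dWc Sc])
  have "dagger U_A = dagger W * dagger (dagger W * swap_op n)"
    unfolding U_A_def by (rule dagger_mult[OF DSc Wc])
  also have "\<dots> = dagger W * (swap_op n * W)"
    by (simp only: dagger_mult[OF dWc Sc] swap_dagger dagger_dagger)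
  also have "\<dots> = U_A" by (simp only: U_A_def assoc_mult_mat[OF dWc Sc Wc])
  finally have U_h: "hermitian_mat U_A" unfolding hermitian_mat_def .

  have Lpos: "\<Lambda> > 0" unfolding \<Lambda>_def using Aval_pos s0_pos by (intro sum_pos) (auto simp: lessThan_empty_iff)
  define \<beta> where "\<beta> l = sqrt (Aval l) / sqrt \<Lambda>" for l
  define \<alpha> where "\<alpha> l = (if l < s0 then complex_of_real (\<beta> l) else 0)" for l
  define a where "a l k = (if l < s0 \<and> k \<in> S l then c k l else l)" for l k
  define b where "b l k = (if l < s0 \<and> k \<in> S l then 0 else (1::nat))" for l k
  define \<tau> where "\<tau> l k = enc4 n (a l k) (b l k) 0 k" for l k
  define x where "x k = enc4 n 0 0 0 k" for k
  have b2: "b l k < 2" for l k unfolding b_def by simp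
  have pw: "(2::nat)^m \<le> 2^n" using mf(2) by (simp add: power_increasing)
  have a_lt: "a l k < 2^n" if "l < 2^m" for l k
  proof -
    have "l < 2^n" using that pw by linarith
    then show ?thesis unfolding a_def using c_range by auto
  qed
  have x_lt: "k < 2^n \<Longrightarrow> x k < ?N" for k unfolding x_def by (rule enc4_lt) auto
  have tau_lt: "l < 2^m \<Longrightarrow> k < 2^n \<Longrightarrow> \<tau> l k < ?N" for l k
    unfolding \<tau>_def using a_lt b2 by (intro enc4_lt) auto
  have x_dec: "r_idx n (x k) = 0" "r_d1 n (x k) = 0" "r_d0 n (x k) = 0" "r_sys n (x k) = k" if "k < 2^n" for k
    unfolding x_def using enc4_dec[OF _ _ that, of 0 0 0] by simp_all

  have PREP_entry: "PREP $$ (l,0) = \<alpha> l" if "l < 2^m" for l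
  proof -
    have "PREP $$ (l,0) = (PREP *\<^sub>v unit_vec (2^m) 0) $ l"
      using mult_vec_unit[OF PREP_c that, of 0] by simp
    then show ?thesis using PREP_0 that unfolding \<alpha>_def \<beta>_def by simp
  qed

  have L2_entry: "L2 $$ (p, x k) = (\<Sum>l<2^m. if p = enc4 n l 0 0 k then \<alpha> l else 0)"
    if p: "p < ?N" and k: "k < 2^n" for p k
  proof -
    have "L2 $$ (p, x k) = (if r_idx n p div 2^m = 0 \<and> r_d1 n p = 0 \<and> r_d0 n p = 0 \<and> r_sys n p = k
                            then PREP $$ (r_idx n p mod 2^m, 0) else 0)"
      unfolding L2_def ext_prep_lift using F2.lift_entry[OF p x_lt[OF k]] x_dec[OF k] by simp
    also have "\<dots> = (\<Sum>l<2^m. if p = enc4 n l 0 0 k then \<alpha> l else 0)"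
    proof (cases "r_idx n p div 2^m = 0 \<and> r_d1 n p = 0 \<and> r_d0 n p = 0 \<and> r_sys n p = k")
      case True
      have r: "r_idx n p < 2^m" using True by (simp add: div_eq_0_iff)
      have pe: "p = enc4 n (r_idx n p) 0 0 k" using enc4_rec[of n p] True by simp
      have "(\<Sum>l<2^m. if p = enc4 n l 0 0 k then \<alpha> l else 0) = (\<Sum>l<2^m. if l = r_idx n p then \<alpha> l else 0)"
      proof (intro sum.cong refl)
        fix l assume "l \<in> {..<(2::nat)^m}"
        have "p = enc4 n l 0 0 k \<longleftrightarrow> l = r_idx n p"
          using enc4_inj[of 0 0 k n 0 0 k "r_idx n p" l] k pe by auto
        then show "(if p = enc4 n l 0 0 k then \<alpha> l else 0) = (if l = r_idx n p then \<alpha> l else 0)" by simp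
      qed
      also have "\<dots> = \<alpha> (r_idx n p)" using r by simp
      finally show ?thesis using True r PREP_entry by simp
    next
      case False
      have "p \<noteq> enc4 n l 0 0 k" if "l < 2^m" for l
        using False enc4_dec[of 0 0 k n l] k that by (auto simp: div_eq_0_iff)
      then show ?thesis using False by (auto intro!: sum.neutral[symmetric])
    qed
    finally show ?thesis .
  qed

  have Oc_col: "Oc $$ (q, enc3 n l 0 k) = (if q = enc3 n (a l k) (b l k) k then 1 else 0)"
    if q: "q < ?M" and l: "l < 2^m" and k: "k < 2^n" for q l k
  proof -
    have ll: "l < 2^n" using l pw by linarith
    have e: "enc3 n l 0 k < ?M" using ll k by (intro enc3_lt) auto
    have t: "enc3 n (a l k) (b l k) k < ?M" using a_lt[OF l] b2 k by (intro enc3_lt) auto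
    have "Oc *\<^sub>v unit_vec ?M (enc3 n l 0 k) = unit_vec ?M (enc3 n (a l k) (b l k) k)"
    proof (cases "l < s0 \<and> k \<in> S l")
      case True then show ?thesis using Oc_in k unfolding a_def b_def by simp
    next
      case False then show ?thesis using Oc_out k l unfolding a_def b_def by auto
    qed
    then have "Oc $$ (q, enc3 n l 0 k) = unit_vec ?M (enc3 n (a l k) (b l k) k) $ q"
      using mult_vec_unit[OF Oc_c q e] by simp
    then show ?thesis using q t by simp
  qed

  have L1_entry: "L1 $$ (p, enc4 n l 0 0 k) = (if p = \<tau> l k then 1 else 0)"
    if p: "p < ?N" and l: "l < 2^m" and k: "k < 2^n" for p l k
  proof -
    have ll: "l < 2^n" using l pw by linarith
    have e: "enc4 n l 0 0 k < ?N" using ll k by (intro enc4_lt) auto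
    have d: "r_idx n (enc4 n l 0 0 k) = l" "r_d1 n (enc4 n l 0 0 k) = 0" "r_d0 n (enc4 n l 0 0 k) = 0"
      "r_sys n (enc4 n l 0 0 k) = k" using enc4_dec[of 0 0 k n l] k by auto
    have "L1 $$ (p, enc4 n l 0 0 k) = (if r_d0 n p = 0 then Oc $$ (?f1 p, enc3 n l 0 k) else 0)"
      unfolding L1_def ext_del0_lift using F1.lift_entry[OF p e] d by simp
    also have "\<dots> = (if r_d0 n p = 0 \<and> ?f1 p = enc3 n (a l k) (b l k) k then 1 else 0)"
      unfolding Oc_col[OF F1.f_lt[OF p] l k] by simp
    also have "\<dots> = (if p = \<tau> l k then 1 else 0)"
      unfolding \<tau>_def using f1_iff[OF p b2 k] by simp
    finally show ?thesis .
  qed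

  have W_entry: "W $$ (p, x k) = (\<Sum>l<s0. if p = \<tau> l k then \<alpha> l else 0)"
    if p: "p < ?N" and k: "k < 2^n" for p k
  proof -
    have "W $$ (p, x k) = (\<Sum>q<?N. L1 $$ (p,q) * L2 $$ (q, x k))"
      unfolding WL by (rule mult_entry[OF L1c L2c p x_lt[OF k]])
    also have "\<dots> = (\<Sum>q<?N. \<Sum>l<2^m. if q = enc4 n l 0 0 k then L1 $$ (p,q) * \<alpha> l else 0)"
      using L2_entry k by (simp add: sum_distrib_left if_distrib cong: if_cong)
    also have "\<dots> = (\<Sum>l<2^m. \<Sum>q<?N. if q = enc4 n l 0 0 k then L1 $$ (p,q) * \<alpha> l else 0)"
      by (rule sum.swap)
    also have "\<dots> = (\<Sum>l<2^m. L1 $$ (p, enc4 n l 0 0 k) * \<alpha> l)"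
    proof (intro sum.cong refl)
      fix l assume l: "l \<in> {..<(2::nat)^m}"
      have "l < 2^m" using l by simp
      then have "l < 2^n" using pw by linarith
      then have "enc4 n l 0 0 k < ?N" using k by (intro enc4_lt) auto
      then show "(\<Sum>q<?N. if q = enc4 n l 0 0 k then L1 $$ (p,q) * \<alpha> l else 0) = L1 $$ (p, enc4 n l 0 0 k) * \<alpha> l"
        by simp
    qed
    also have "\<dots> = (\<Sum>l<2^m. if p = \<tau> l k then \<alpha> l else 0)"
      using L1_entry[OF p _ k] by (intro sum.cong refl) auto
    also have "\<dots> = (\<Sum>l<s0. if p = \<tau> l k then \<alpha> l else 0)"
      using mf(1) by (intro sum.mono_neutral_right) (auto simp: \<alpha>_def)
    finally show ?thesis .
  qed

  have cond: "sig n (\<tau> l k) = \<tau> l' i \<longleftrightarrow> (k \<in> S l \<and> c k l = i \<and> i \<in> S l' \<and> c i l' = k)"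
    if l: "l < s0" and l': "l' < s0" and i: "i < 2^n" and k: "k < 2^n" for l l' i k
  proof -
    have lm: "l < 2^m" "l' < 2^m" using l l' mf(1) by auto
    have "sig n (\<tau> l k) = enc4 n k 0 (b l k) (a l k)"
      unfolding \<tau>_def using b2 k a_lt[OF lm(1)] by (intro sig_enc4) auto
    then have "sig n (\<tau> l k) = \<tau> l' i \<longleftrightarrow> (k = a l' i \<and> 0 = b l' i \<and> b l k = 0 \<and> a l k = i)"
      unfolding \<tau>_def using enc4_inj[of 0 "b l k" "a l k" n "b l' i" 0 i k "a l' i"] b2 a_lt[OF lm(1)] i by auto
    then show ?thesis unfolding a_def b_def using l l' by auto
  qed

  have main: "U_A $$ (x i, x k) = complex_of_real (A $$ (i,k) / \<Lambda>)" if i: "i < 2^n" and k: "k < 2^n" for i k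
  proof -
    have DS_entry: "(dagger W * swap_op n) $$ (x i, p) = cnj (W $$ (sig n p, x i))" if p: "p < ?N" for p
    proof -
      have "(dagger W * swap_op n) $$ (x i, p) = (\<Sum>q<?N. cnj (W $$ (q, x i)) * (if q = sig n p then 1 else 0))"
        using mult_entry[OF dWc Sc x_lt[OF i] p] dagger_entry[OF Wc x_lt[OF i]] swap_entry[OF _ p]
        by simp
      also have "\<dots> = cnj (W $$ (sig n p, x i))" using sig_lt[OF p] by (simp add: if_distrib cong: if_cong)
      finally show ?thesis .
    qed
    have "U_A $$ (x i, x k) = (\<Sum>p<?N. (dagger W * swap_op n) $$ (x i, p) * W $$ (p, x k))"
      unfolding U_A_def by (rule mult_entry[OF DSc Wc x_lt[OF i] x_lt[OF k]])
    also have "\<dots> = (\<Sum>p<?N. \<Sum>l<s0. if p = \<tau> l k then \<alpha> l * cnj (W $$ (sig n p, x i)) else 0)"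
      using DS_entry W_entry k by (simp add: sum_distrib_left if_distrib mult.commute cong: if_cong)
    also have "\<dots> = (\<Sum>l<s0. \<Sum>p<?N. if p = \<tau> l k then \<alpha> l * cnj (W $$ (sig n p, x i)) else 0)"
      by (rule sum.swap)
    also have "\<dots> = (\<Sum>l<s0. \<alpha> l * cnj (W $$ (sig n (\<tau> l k), x i)))"
    proof (intro sum.cong refl)
      fix l assume "l \<in> {..<s0}"
      then have "\<tau> l k < ?N" using tau_lt k mf(1) by auto
      then show "(\<Sum>p<?N. if p = \<tau> l k then \<alpha> l * cnj (W $$ (sig n p, x i)) else 0) = \<alpha> l * cnj (W $$ (sig n (\<tau> l k), x i))"
        by simp
    qed
    also have "\<dots> = (\<Sum>l<s0. \<Sum>l'<s0. if (k \<in> S l \<and> c k l = i) \<and> (i \<in> S l' \<and> c i l' = k)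
                        then complex_of_real (\<beta> l * \<beta> l') else 0)"
    proof (intro sum.cong refl)
      fix l assume l: "l \<in> {..<s0}"
      then have "\<tau> l k < ?N" using tau_lt k mf(1) by auto
      then have "sig n (\<tau> l k) < ?N" by (rule sig_lt)
      then have "\<alpha> l * cnj (W $$ (sig n (\<tau> l k), x i)) = \<alpha> l * cnj (\<Sum>l'<s0. if sig n (\<tau> l k) = \<tau> l' i then \<alpha> l' else 0)"
        using W_entry i by simp
      also have "\<dots> = (\<Sum>l'<s0. \<alpha> l * (if sig n (\<tau> l k) = \<tau> l' i then cnj (\<alpha> l') else 0))"
        by (simp add: sum_distrib_left if_distrib cong: if_cong)
      also have "\<dots> = (\<Sum>l'<s0. if (k \<in> S l \<and> c k l = i) \<and> (i \<in> S l' \<and> c i l' = k)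
                        then complex_of_real (\<beta> l * \<beta> l') else 0)"
        using cond[OF _ _ i k] l unfolding \<alpha>_def by (intro sum.cong refl) auto
      finally show "\<alpha> l * cnj (W $$ (sig n (\<tau> l k), x i)) = (\<Sum>l'<s0. if (k \<in> S l \<and> c k l = i) \<and> (i \<in> S l' \<and> c i l' = k)
                        then complex_of_real (\<beta> l * \<beta> l') else 0)" .
    qed
    also have "\<dots> = complex_of_real (\<Sum>l<s0. \<Sum>l'<s0. if (k \<in> S l \<and> c k l = i) \<and> (i \<in> S l' \<and> c i l' = k)
                        then \<beta> l * \<beta> l' else 0)"
      by (simp add: of_real_sum if_distrib cong: if_cong)
    also have "(\<Sum>l<s0. \<Sum>l'<s0. if (k \<in> S l \<and> c k l = i) \<and> (i \<in> S l' \<and> c i l' = k)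
                        then \<beta> l * \<beta> l' else 0)
             = (\<Sum>l<s0. if k \<in> S l \<and> c k l = i then \<beta> l else 0) * (\<Sum>l'<s0. if i \<in> S l' \<and> c i l' = k then \<beta> l' else 0)"
      by (simp add: sum_product if_distrib cong: if_cong) (auto intro!: sum.cong)
    also have "\<dots> = A $$ (i,k) / \<Lambda>"
    proof -
      have Aik: "A $$ (i,k) = (\<Sum>l<s0. if k \<in> S l \<and> c k l = i then Aval l else 0)"
      proof -
        have "A $$ (i,k) = (\<Sum>l<s0. \<Sum>j\<in>S l. if c j l = i \<and> j = k then Aval l else 0)" using A_dict i k by simp
        also have "\<dots> = (\<Sum>l<s0. if k \<in> S l \<and> c k l = i then Aval l else 0)"
        proof (intro sum.cong refl)
          fix l assume "l \<in> {..<s0}"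
          then have fin: "finite (S l)" using S_sub by (auto intro: finite_subset)
          have "(\<Sum>j\<in>S l. if c j l = i \<and> j = k then Aval l else 0) = (\<Sum>j\<in>S l. if j = k then (if c k l = i then Aval l else 0) else 0)"
            by (intro sum.cong) auto
          also have "\<dots> = (if k \<in> S l \<and> c k l = i then Aval l else 0)" using fin by simp
          finally show "(\<Sum>j\<in>S l. if c j l = i \<and> j = k then Aval l else 0) = (if k \<in> S l \<and> c k l = i then Aval l else 0)" .
        qed
        finally show ?thesis .
      qed
      have Aki: "A $$ (k,i) = (\<Sum>l<s0. if i \<in> S l \<and> c i l = k then Aval l else 0)"
      proof -
        have "A $$ (k,i) = (\<Sum>l<s0. \<Sum>j\<in>S l. if c j l = k \<and> j = i then Aval l else 0)" using A_dict i k by simp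
        also have "\<dots> = (\<Sum>l<s0. if i \<in> S l \<and> c i l = k then Aval l else 0)"
        proof (intro sum.cong refl)
          fix l assume "l \<in> {..<s0}"
          then have fin: "finite (S l)" using S_sub by (auto intro: finite_subset)
          have "(\<Sum>j\<in>S l. if c j l = k \<and> j = i then Aval l else 0) = (\<Sum>j\<in>S l. if j = i then (if c i l = k then Aval l else 0) else 0)"
            by (intro sum.cong) auto
          also have "\<dots> = (if i \<in> S l \<and> c i l = k then Aval l else 0)" using fin by simp
          finally show "(\<Sum>j\<in>S l. if c j l = k \<and> j = i then Aval l else 0) = (if i \<in> S l \<and> c i l = k then Aval l else 0)" .
        qed
        finally show ?thesis .
      qed
      have sym: "A $$ (k,i) = A $$ (i,k)"
        using A_sym A_carrier i k by (metis carrier_matD(1) carrier_matD(2) index_transpose_mat(1))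
      have uniqP: "l = l0" if "l < s0" "k \<in> S l \<and> c k l = i" "l0 < s0" "k \<in> S l0 \<and> c k l0 = i" for l l0
        using c_inj k that unfolding inj_on_def by auto
      have uniqQ: "l = l0" if "l < s0" "i \<in> S l \<and> c i l = k" "l0 < s0" "i \<in> S l0 \<and> c i l0 = k" for l l0
        using c_inj i that unfolding inj_on_def by auto
      have none: "(\<Sum>l<s0. if P l then h l else 0) = (0::real)" if "\<And>l. l < s0 \<Longrightarrow> \<not> P l" for P h
        using that by (intro sum.neutral) auto
      show ?thesis
      proof (cases "\<exists>l0<s0. k \<in> S l0 \<and> c k l0 = i")
        case True
        then obtain l0 where l0: "l0 < s0" "k \<in> S l0 \<and> c k l0 = i" by blast
        have A1: "A $$ (i,k) = Aval l0" unfolding Aik by (rule sum_unique[where P="\<lambda>l. k \<in> S l \<and> c k l = i", OF l0]) (use uniqP l0 in blast)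
        have "\<exists>l1<s0. i \<in> S l1 \<and> c i l1 = k"
        proof (rule ccontr)
          assume "\<not> ?thesis"
          then have "A $$ (k,i) = 0" unfolding Aki by (intro none) auto
          then show False using sym A1 Aval_pos l0 by auto
        qed
        then obtain l1 where l1: "l1 < s0" "i \<in> S l1 \<and> c i l1 = k" by blast
        have A2: "A $$ (k,i) = Aval l1" unfolding Aki by (rule sum_unique[where P="\<lambda>l. i \<in> S l \<and> c i l = k", OF l1]) (use uniqQ l1 in blast)
        have e: "Aval l1 = Aval l0" using A1 A2 sym by simp
        have "(\<Sum>l<s0. if k \<in> S l \<and> c k l = i then \<beta> l else 0) = \<beta> l0"
          by (rule sum_unique[where P="\<lambda>l. k \<in> S l \<and> c k l = i", OF l0]) (use uniqP l0 in blast)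
        moreover have "(\<Sum>l<s0. if i \<in> S l \<and> c i l = k then \<beta> l else 0) = \<beta> l1"
          by (rule sum_unique[where P="\<lambda>l. i \<in> S l \<and> c i l = k", OF l1]) (use uniqQ l1 in blast)
        moreover have "\<beta> l0 * \<beta> l1 = Aval l0 / \<Lambda>"
        proof -
          have "Aval l0 > 0" using Aval_pos l0 by simp
          then show ?thesis unfolding \<beta>_def e using Lpos
            by (simp add: real_sqrt_mult[symmetric] flip: real_sqrt_mult)
        qed
        ultimately show ?thesis using A1 by simp
      next
        case False
        then have "A $$ (i,k) = 0" unfolding Aik by (intro none) auto
        moreover have "(\<Sum>l<s0. if k \<in> S l \<and> c k l = i then \<beta> l else 0) = 0"
          using False by (intro none) auto
        ultimately show ?thesis by simp
      qed
    qed
    finally show ?thesis .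
  qed
  show ?thesis using U_u U_h main unfolding x_def by blast
qed

end
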